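(* Let $k$ be a field, $A,B$ abelian groups, $R$ an $A$-graded and $S$ a $B$-graded finite-dimensional Frobenius $k$-algebra with forms $\langle-,-\rangle_R,\langle-,-\rangle_S$, and $t:A\otimes B\to k^\times$ a bicharacter. Suppose there exist $\sigma_R\in A$, $\sigma_S\in B$ such that for homogeneous $r,r'\in R$, $\langle r,r'\rangle_R\neq0$ implies $|r|+|r'|+\sigma_R=0$, and for homogeneous $s,s'\in S$, $\langle s,s'\rangle_S\ne0$ implies $|s|+|s'|+\sigma_S=0$. Suppose further that the Nakayama automorphisms of $R$ and $S$ are diagonalisable. Then the Nakayama automorphism of $R\otimes^tS$, with respect to the form $\langle r\otimes s,r'\otimes s'\rangle=t(|r'|,|s|)\langle r,r'\rangle_R\langle s,s'\rangle_S$, is diagonalisable.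
   Context: $R\otimes^tS$ is $R\otimes S$ with product $(r\otimes s)(r'\otimes s')=t(|r'|,|s|)rr'\otimes ss'$ for homogeneous elements; $|\cdot|$ denotes degree. The Nakayama automorphism $\nu$ of a Frobenius algebra is defined by $\langle x,y\rangle=\langle y,\nu(x)\rangle$ for all $y$. *)

theory Defs
  imports Main
begin

text \<open>A finite-dimensional graded k-algebra is represented in coordinates with respect to
a basis of homogeneous elements indexed by a finite type 'n: vectors are functions
'n \<Rightarrow> 'k, the basis vector n has degree deg n, multiplication is given by structure
constants m i j l (e_i e_j = sum_l m i j l e_l), and a bilinear form by its Gram matrix g.\<close>

definition bform :: "('n::finite \<Rightarrow> 'n \<Rightarrow> 'k::field) \<Rightarrow> ('n \<Rightarrow> 'k) \<Rightarrow> ('n \<Rightarrow> 'k) \<Rightarrow> 'k" where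
  "bform g x y = (\<Sum>i\<in>UNIV. \<Sum>j\<in>UNIV. x i * y j * g i j)"

definition amul :: "('n::finite \<Rightarrow> 'n \<Rightarrow> 'n \<Rightarrow> 'k::field) \<Rightarrow> ('n \<Rightarrow> 'k) \<Rightarrow> ('n \<Rightarrow> 'k) \<Rightarrow> ('n \<Rightarrow> 'k)" where
  "amul m x y = (\<lambda>l. \<Sum>i\<in>UNIV. \<Sum>j\<in>UNIV. x i * y j * m i j l)"

definition vscale :: "'k::field \<Rightarrow> ('n \<Rightarrow> 'k) \<Rightarrow> ('n \<Rightarrow> 'k)" where
  "vscale c x = (\<lambda>i. c * x i)"

definition frobenius_algebra ::
  "('n::finite \<Rightarrow> 'n \<Rightarrow> 'n \<Rightarrow> 'k::field) \<Rightarrow> ('n \<Rightarrow> 'k) \<Rightarrow> ('n \<Rightarrow> 'n \<Rightarrow> 'k) \<Rightarrow> bool" where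
  "frobenius_algebra m u g \<longleftrightarrow>
     (\<forall>x y z. amul m (amul m x y) z = amul m x (amul m y z)) \<and>
     (\<forall>x. amul m u x = x \<and> amul m x u = x) \<and>
     (\<forall>x y z. bform g (amul m x y) z = bform g x (amul m y z)) \<and>
     (\<forall>x. (\<forall>y. bform g x y = 0) \<longrightarrow> x = (\<lambda>_. 0)) \<and>
     (\<forall>y. (\<forall>x. bform g x y = 0) \<longrightarrow> y = (\<lambda>_. 0))"

definition graded_algebra :: "('n \<Rightarrow> 'a::ab_group_add) \<Rightarrow> ('n \<Rightarrow> 'n \<Rightarrow> 'n \<Rightarrow> 'k::field) \<Rightarrow> bool" where
  "graded_algebra deg m \<longleftrightarrow> (\<forall>i j l. m i j l \<noteq> 0 \<longrightarrow> deg l = deg i + deg j)"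

definition homogeneous :: "('n \<Rightarrow> 'a) \<Rightarrow> 'a \<Rightarrow> ('n \<Rightarrow> 'k::zero) \<Rightarrow> bool" where
  "homogeneous deg a x \<longleftrightarrow> (\<forall>i. x i \<noteq> 0 \<longrightarrow> deg i = a)"

definition bicharacter :: "('a::ab_group_add \<Rightarrow> 'b::ab_group_add \<Rightarrow> 'k::field) \<Rightarrow> bool" where
  "bicharacter t \<longleftrightarrow>
     (\<forall>a b. t a b \<noteq> 0) \<and>
     (\<forall>a a' b. t (a + a') b = t a b * t a' b) \<and>
     (\<forall>a b b'. t a (b + b') = t a b * t a b')"

definition is_nakayama :: "('n::finite \<Rightarrow> 'n \<Rightarrow> 'k::field) \<Rightarrow> (('n \<Rightarrow> 'k) \<Rightarrow> ('n \<Rightarrow> 'k)) \<Rightarrow> bool" where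
  "is_nakayama g \<nu> \<longleftrightarrow> (\<forall>x y. bform g x y = bform g y (\<nu> x))"

definition diagonalisable :: "(('n::finite \<Rightarrow> 'k::field) \<Rightarrow> ('n \<Rightarrow> 'k)) \<Rightarrow> bool" where
  "diagonalisable f \<longleftrightarrow>
     (\<forall>x y. f (\<lambda>i. x i + y i) = (\<lambda>i. f x i + f y i)) \<and> (\<forall>c x. f (vscale c x) = vscale c (f x)) \<and>
     (\<exists>(v :: 'n \<Rightarrow> ('n \<Rightarrow> 'k)) (ev :: 'n \<Rightarrow> 'k).
        (\<forall>j. f (v j) = vscale (ev j) (v j)) \<and>
        (\<forall>c. (\<forall>l. (\<Sum>j\<in>UNIV. c j * v j l) = 0) \<longrightarrow> (\<forall>j. c j = 0)))"

text \<open>Gram matrix of the form on R \<otimes>^t S w.r.t. the basis e_i \<otimes> f_j: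
 <e_i \<otimes> f_j, e_i' \<otimes> f_j'> = t(|e_i'|, |f_j|) <e_i,e_i'>_R <f_j,f_j'>_S.\<close>
definition twisted_gram ::
  "('a \<Rightarrow> 'b \<Rightarrow> 'k::field) \<Rightarrow> ('i \<Rightarrow> 'a) \<Rightarrow> ('j \<Rightarrow> 'b) \<Rightarrow> ('i \<Rightarrow> 'i \<Rightarrow> 'k) \<Rightarrow> ('j \<Rightarrow> 'j \<Rightarrow> 'k)
    \<Rightarrow> ('i \<times> 'j) \<Rightarrow> ('i \<times> 'j) \<Rightarrow> 'k" where
  "twisted_gram t degR degS gR gS p q =
     t (degR (fst q)) (degS (snd p)) * gR (fst p) (fst q) * gS (snd p) (snd q)"

text \<open>Structure constants of R \<otimes>^t S (not needed by the statement, given for completeness):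
 (e_i \<otimes> f_j)(e_i' \<otimes> f_j') = t(|e_i'|,|f_j|) e_i e_i' \<otimes> f_j f_j'.\<close>
definition twisted_mult ::
  "('a \<Rightarrow> 'b \<Rightarrow> 'k::field) \<Rightarrow> ('i \<Rightarrow> 'a) \<Rightarrow> ('j \<Rightarrow> 'b) \<Rightarrow> ('i \<Rightarrow> 'i \<Rightarrow> 'i \<Rightarrow> 'k) \<Rightarrow> ('j \<Rightarrow> 'j \<Rightarrow> 'j \<Rightarrow> 'k)
    \<Rightarrow> ('i \<times> 'j) \<Rightarrow> ('i \<times> 'j) \<Rightarrow> ('i \<times> 'j) \<Rightarrow> 'k" where
  "twisted_mult t degR degS mR mS p q r =
     t (degR (fst q)) (degS (snd p)) * mR (fst p) (fst q) (fst r) * mS (snd p) (snd q) (snd r)"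

end

theory Submission imports Defs "HOL-Library.Function_Algebras" HOL.Vector_Spaces begin

definition delta :: "'n \<Rightarrow> 'n \<Rightarrow> 'k::field" where "delta i = (\<lambda>j. if j = i then 1 else 0)"

lemma vscale_apply[simp]: "vscale c x i = c * x i" by (simp add: vscale_def)

interpretation fv: vector_space "vscale :: 'k::field \<Rightarrow> ('n \<Rightarrow> 'k) \<Rightarrow> _"
  by unfold_locales (auto simp: vscale_def fun_eq_iff algebra_simps)

lemma sum_fun_apply: "(sum f A) x = (\<Sum>a\<in>A. f a x)"
  by (induction A rule: infinite_finite_induct) auto

lemma fv_span_delta: "(x::'n::finite \<Rightarrow> 'k::field) = (\<Sum>i\<in>UNIV. vscale (x i) (delta i))"
  by (simp add: fun_eq_iff sum_fun_apply delta_def if_distrib[where f="\<lambda>y. _ * y"] cong: if_cong)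

interpretation fdv: finite_dimensional_vector_space "vscale :: 'k::field \<Rightarrow> ('n::finite \<Rightarrow> 'k) \<Rightarrow> _" "range delta"
proof
  show "finite (range delta :: ('n \<Rightarrow> 'k) set)" by simp
  show "fv.independent (range delta :: ('n \<Rightarrow> 'k) set)"
  proof (rule fv.independent_if_scalars_zero)
    fix f :: "('n \<Rightarrow> 'k) \<Rightarrow> 'k" and x :: "'n \<Rightarrow> 'k"
    assume s: "(\<Sum>x\<in>range delta. vscale (f x) x) = 0" and x: "x \<in> range delta"
    then obtain i :: 'n where xi: "x = delta i" by auto
    have inj: "inj (delta :: 'n \<Rightarrow> 'n \<Rightarrow> 'k)"
      by (auto simp: inj_def delta_def fun_eq_iff)
    have "0 = (\<Sum>x\<in>range delta. vscale (f x) x) i" using s by simp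
    also have "\<dots> = (\<Sum>j\<in>UNIV. f (delta j) * delta j i)"
      by (simp add: sum_fun_apply sum.reindex[OF inj])
    also have "\<dots> = f (delta i)" by (simp add: delta_def if_distrib[where f="\<lambda>y. _ * y"] cong: if_cong)
    finally show "f x = 0" using xi by simp
  qed simp
  show "fv.span (range delta :: ('n \<Rightarrow> 'k) set) = UNIV"
  proof safe
    fix x :: "'n \<Rightarrow> 'k"
    have "(\<Sum>i\<in>UNIV. vscale (x i) (delta i)) \<in> fv.span (range delta)"
      by (intro fv.span_sum fv.span_scale fv.span_base) auto
    then show "x \<in> fv.span (range delta)" using fv_span_delta[of x] by simp
  qed auto
qed

definition Lmap :: "('n::finite \<Rightarrow> 'n \<Rightarrow> 'k::field) \<Rightarrow> ('n \<Rightarrow> 'k) \<Rightarrow> ('n \<Rightarrow> 'k)" where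
  "Lmap g y = (\<lambda>q. \<Sum>r\<in>UNIV. y r * g q r)"

lemma bform_Lmap: "bform g x y = (\<Sum>q\<in>UNIV. x q * Lmap g y q)"
  unfolding bform_def Lmap_def by (simp add: sum_distrib_left mult.assoc)

lemma linear_Lmap: "Vector_Spaces.linear vscale vscale (Lmap g)"
  unfolding Vector_Spaces.linear_iff
  by (auto simp: fv.vector_space_axioms Lmap_def fun_eq_iff sum.distrib sum_distrib_left algebra_simps)

lemma Lmap_minus: "Lmap g (x - y) = Lmap g x - Lmap g y"
  by (auto simp: Lmap_def fun_eq_iff sum_subtractf algebra_simps)

lemma nak_exists:
  fixes g :: "'n::finite \<Rightarrow> 'n \<Rightarrow> 'k::field"
  assumes nd: "\<forall>y. (\<forall>x. bform g x y = 0) \<longrightarrow> y = (\<lambda>_. 0)"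
  shows "\<exists>N. \<forall>i q. g i q = (\<Sum>r\<in>UNIV. N i r * g q r)"
proof -
  have "inj (Lmap g)"
  proof (rule injI)
    fix x y assume "Lmap g x = Lmap g y"
    then have "Lmap g (x - y) = 0" by (simp add: Lmap_minus)
    then have "\<forall>z. bform g z (x - y) = 0" by (simp add: bform_Lmap)
    then have "x - y = 0" using nd by (simp add: zero_fun_def)
    then show "x = y" by simp
  qed
  then have "surj (Lmap g)" using fdv.linear_inj_imp_surj[OF linear_Lmap] by blast
  then have "\<forall>i. \<exists>y. Lmap g y = (\<lambda>q. g i q)" by (metis surjD)
  then obtain N where "\<forall>i. Lmap g (N i) = (\<lambda>q. g i q)" by metis
  then show ?thesis by (auto simp: Lmap_def fun_eq_iff) (metis)
qed

lemma nak_homog: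
  fixes g :: "'n::finite \<Rightarrow> 'n \<Rightarrow> 'k::field" and deg :: "'n \<Rightarrow> 'a::ab_group_add"
  assumes nd: "\<forall>y. (\<forall>x. bform g x y = 0) \<longrightarrow> y = (\<lambda>_. 0)"
    and N: "\<forall>i q. g i q = (\<Sum>r\<in>UNIV. N i r * g q r)"
    and gr: "\<forall>a b. g a b \<noteq> 0 \<longrightarrow> deg a + deg b + \<sigma> = 0"
    and nz: "N i r \<noteq> 0"
  shows "deg r = deg i"
proof (rule ccontr)
  assume ne: "deg r \<noteq> deg i"
  define w where "w = (\<lambda>r. if deg r \<noteq> deg i then N i r else 0)"
  have "Lmap g w q = 0" for q
  proof (cases "deg q + deg i + \<sigma> = 0")
    case True
    have "w r' * g q r' = 0" for r'
    proof (cases "deg r' \<noteq> deg i \<and> g q r' \<noteq> 0")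
      case True
      then have "deg q + deg r' + \<sigma> = 0" using gr by blast
      with \<open>deg q + deg i + \<sigma> = 0\<close> have "deg r' = deg i"
        by (metis add.commute add_left_cancel add.assoc)
      then show ?thesis using True by simp
    next
      case False then show ?thesis by (auto simp: w_def)
    qed
    then show ?thesis unfolding Lmap_def by (simp del: mult_eq_0_iff)
  next
    case False
    have "g i q = 0" using gr False by (metis add.commute add.assoc)
    have z2: "(if deg r' = deg i then N i r' else 0) * g q r' = 0" for r'
    proof (cases "deg r' = deg i \<and> g q r' \<noteq> 0")
      case True
      then have "deg q + deg r' + \<sigma> = 0" using gr by blast
      then show ?thesis using True False by simp
    next
      case False then show ?thesis by auto
    qed
    have "0 = (\<Sum>r\<in>UNIV. N i r * g q r)" using N \<open>g i q = 0\<close> by metis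
    also have "\<dots> = (\<Sum>r\<in>UNIV. w r * g q r + (if deg r = deg i then N i r else 0) * g q r)"
      by (rule sum.cong) (auto simp: w_def)
    also have "\<dots> = Lmap g w q" by (simp add: z2 Lmap_def)
    finally show ?thesis by simp
  qed
  then have "\<forall>z. bform g z w = 0" by (simp add: bform_Lmap)
  then have "w = (\<lambda>_. 0)" using nd by blast
  then have "w r = 0" by simp
  then show False using ne nz by (simp add: w_def)
qed

definition Mmap :: "('n::finite \<Rightarrow> 'n \<Rightarrow> 'k::field) \<Rightarrow> ('n \<Rightarrow> 'k) \<Rightarrow> ('n \<Rightarrow> 'k)" where
  "Mmap N x = (\<lambda>r. \<Sum>i\<in>UNIV. x i * N i r)"

lemma Mmap_add: "Mmap N (\<lambda>i. x i + y i) = (\<lambda>i. Mmap N x i + Mmap N y i)"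
  by (auto simp: Mmap_def fun_eq_iff sum.distrib algebra_simps)

lemma Mmap_scale: "Mmap N (vscale c x) = vscale c (Mmap N x)"
  by (auto simp: Mmap_def fun_eq_iff sum_distrib_left algebra_simps)

lemma Mmap_sum: "Mmap N (\<Sum>j\<in>A. vscale (c j) (v j)) = (\<Sum>j\<in>A. vscale (c j) (Mmap N (v j)))"
  by (induction A rule: infinite_finite_induct)
     (auto simp: Mmap_def fun_eq_iff sum.distrib algebra_simps sum_distrib_left)

lemma indep_conv:
  fixes v :: "'n::finite \<Rightarrow> 'n \<Rightarrow> 'k::field"
  assumes ind: "\<forall>c. (\<forall>l. (\<Sum>j\<in>UNIV. c j * v j l) = 0) \<longrightarrow> (\<forall>j. c j = 0)"
  shows "inj v" "fv.independent (range v)"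
proof -
  show "inj v"
  proof (rule injI)
    fix a b assume ab: "v a = v b"
    show "a = b"
    proof (rule ccontr)
      assume "a \<noteq> b"
      define c where "c = (\<lambda>j. (if j = a then 1 else 0) - (if j = b then 1 else (0::'k)))"
      have "(\<Sum>j\<in>UNIV. c j * v j l) = 0" for l
        using \<open>a \<noteq> b\<close> ab by (simp add: c_def left_diff_distrib sum_subtractf
            if_distrib[where f="\<lambda>y. y * _"] cong: if_cong)
      then have "c a = 0" using ind by blast
      then show False using \<open>a \<noteq> b\<close> by (simp add: c_def)
    qed
  qed
  show "fv.independent (range v)"
  proof (rule fv.independent_if_scalars_zero)
    fix f :: "('n \<Rightarrow> 'k) \<Rightarrow> 'k" and x :: "'n \<Rightarrow> 'k"
    assume s: "(\<Sum>x\<in>range v. vscale (f x) x) = 0" and x: "x \<in> range v"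
    then obtain a where xa: "x = v a" by auto
    have "(\<Sum>j\<in>UNIV. f (v j) * v j l) = 0" for l
    proof -
      have "0 = (\<Sum>x\<in>range v. vscale (f x) x) l" using s by simp
      also have "\<dots> = (\<Sum>j\<in>UNIV. f (v j) * v j l)"
        by (simp add: sum_fun_apply sum.reindex[OF \<open>inj v\<close>])
      finally show ?thesis by simp
    qed
    then have "f (v a) = 0" using ind[rule_format, of "\<lambda>j. f (v j)"] by blast
    then show "f x = 0" using xa by simp
  qed simp
qed

lemma card_delta: "card (range (delta :: 'n::finite \<Rightarrow> 'n \<Rightarrow> 'k::field)) = card (UNIV :: 'n set)"
proof -
  have "inj (delta :: 'n \<Rightarrow> 'n \<Rightarrow> 'k)" by (auto simp: inj_def delta_def fun_eq_iff)
  then show ?thesis by (simp add: card_image)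
qed

lemma span_range_v:
  fixes v :: "'n::finite \<Rightarrow> 'n \<Rightarrow> 'k::field"
  assumes ind: "\<forall>c. (\<forall>l. (\<Sum>j\<in>UNIV. c j * v j l) = 0) \<longrightarrow> (\<forall>j. c j = 0)"
  shows "fv.span (range v) = UNIV"
proof -
  have "card (range v) = card (UNIV :: 'n set)" using indep_conv(1)[OF ind] by (simp add: card_image)
  then have "card (range v) = fv.dim (UNIV :: ('n \<Rightarrow> 'k) set)"
    by (simp add: card_delta)
  then have "UNIV \<subseteq> fv.span (range v)"
    using fdv.card_eq_dim[of "range v" UNIV] indep_conv(2)[OF ind] by simp
  then show ?thesis by auto
qed

definition Pd :: "('n \<Rightarrow> 'a) \<Rightarrow> 'a \<Rightarrow> ('n \<Rightarrow> 'k::zero) \<Rightarrow> ('n \<Rightarrow> 'k)" where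
  "Pd deg d x = (\<lambda>i. if deg i = d then x i else 0)"

lemma Pd_sum: "Pd deg d (\<Sum>j\<in>A. vscale (c j) (v j)) = (\<Sum>j\<in>A. vscale (c j) (Pd deg d (v j)))"
  by (induction A rule: infinite_finite_induct) (auto simp: Pd_def fun_eq_iff sum_fun_apply)

lemma twist_diag:
  fixes N :: "'n::finite \<Rightarrow> 'n \<Rightarrow> 'k::field" and deg :: "'n \<Rightarrow> 'a" and h :: "'a \<Rightarrow> 'k"
  assumes hom: "\<forall>i r. N i r \<noteq> 0 \<longrightarrow> deg r = deg i"
    and dg: "diagonalisable (Mmap N)"
  shows "diagonalisable (Mmap (\<lambda>i r. h (deg i) * N i r))"
proof -
  let ?M = "Mmap (\<lambda>i r. h (deg i) * N i r)"
  obtain v :: "'n \<Rightarrow> 'n \<Rightarrow> 'k" and ev where eig: "\<forall>j. Mmap N (v j) = vscale (ev j) (v j)"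
    and ind: "\<forall>c. (\<forall>l. (\<Sum>j\<in>UNIV. c j * v j l) = 0) \<longrightarrow> (\<forall>j. c j = 0)"
    using dg unfolding diagonalisable_def by (elim conjE exE) blast
  have f1: "Mmap N (Pd deg d x) = Pd deg d (Mmap N x)" for d x
  proof
    fix r
    show "Mmap N (Pd deg d x) r = Pd deg d (Mmap N x) r"
    proof (cases "deg r = d")
      case True
      then show ?thesis unfolding Mmap_def Pd_def using hom
        by (auto intro!: sum.cong) (metis)
    next
      case False
      then show ?thesis unfolding Mmap_def Pd_def using hom
        by (auto intro!: sum.neutral)
    qed
  qed
  have f2: "?M (Pd deg d x) = vscale (h d) (Mmap N (Pd deg d x))" for d x
    by (auto simp: Mmap_def Pd_def fun_eq_iff sum_distrib_left intro!: sum.cong)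
  have eigE: "?M (Pd deg d (v a)) = vscale (h d * ev a) (Pd deg d (v a))" for d a
    using f1 f2 eig by (auto simp: Pd_def fun_eq_iff)
  define E where "E = (\<lambda>(i, a). Pd deg (deg i) (v a)) ` (UNIV :: ('n \<times> 'n) set)"
  have finE: "finite E" unfolding E_def by simp
  have eigE': "\<exists>\<mu>. ?M u = vscale \<mu> u" if uE: "u \<in> E" for u
  proof -
    obtain i a :: 'n where "u = Pd deg (deg i) (v a)" using uE unfolding E_def by (auto simp: image_iff split: prod.splits)
    then show ?thesis using eigE by blast
  qed
  have spv: "fv.span (range v) = UNIV" by (rule span_range_v[OF ind])
  have "delta i \<in> fv.span E" for i :: 'n
  proof -
    have "delta i \<in> fv.span (range v)" using spv by simp
    then obtain u where u: "delta i = (\<Sum>y\<in>range v. vscale (u y) y)"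
      using fv.span_finite[of "range v"] by auto
    have "delta i = Pd deg (deg i) (delta i)" by (auto simp: Pd_def delta_def fun_eq_iff)
    also have "\<dots> = (\<Sum>y\<in>range v. vscale (u y) (Pd deg (deg i) y))"
      using u by (simp add: Pd_sum)
    also have "\<dots> \<in> fv.span E"
      by (intro fv.span_sum fv.span_scale fv.span_base) (auto simp: E_def)
    finally show ?thesis .
  qed
  then have "range delta \<subseteq> fv.span E" by auto
  then have "fv.span (range delta) \<subseteq> fv.span E" using fv.span_mono[of "range delta" "fv.span E"] by (simp add: fv.span_span)
  then have spE: "fv.span E = UNIV" using fdv.span_Basis by auto
  obtain B where B: "B \<subseteq> E" "fv.independent B" "E \<subseteq> fv.span B"
    using fv.maximal_independent_subset by blast
  have "fv.span E \<subseteq> fv.span B" using fv.span_mono[OF B(3)] by (simp add: fv.span_span)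
  then have spB: "UNIV \<subseteq> fv.span B" using spE by simp
  have finB: "finite B" using B(1) finE finite_subset by blast
  have "card B = fv.dim (UNIV :: ('n \<Rightarrow> 'k) set)"
    using fv.basis_card_eq_dim[OF _ spB B(2)] by simp
  then have cB: "card B = card (UNIV :: 'n set)" by (simp add: card_delta)
  obtain f where bij: "bij_betw f (UNIV :: 'n set) B"
    using finite_same_card_bij[OF _ finB cB[symmetric]] by auto
  have fE: "f j \<in> E" for j using bij B(1) by (auto simp: bij_betw_def)
  define evw where "evw j = (SOME \<mu>. ?M (f j) = vscale \<mu> (f j))" for j
  have eigw: "?M (f j) = vscale (evw j) (f j)" for j
    unfolding evw_def using eigE'[OF fE] by (rule someI_ex)
  have indw: "\<forall>j. c j = 0" if c: "\<forall>l. (\<Sum>j\<in>UNIV. c j * f j l) = 0" for c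
  proof
    fix j
    define u where "u = c \<circ> inv_into UNIV f"
    have "(\<Sum>y\<in>B. vscale (u y) y) = (\<Sum>j\<in>UNIV. vscale (u (f j)) (f j))"
      using sum.reindex_bij_betw[OF bij, of "\<lambda>y. vscale (u y) y"] by simp
    also have "\<dots> = (\<Sum>j\<in>UNIV. vscale (c j) (f j))"
      using bij by (simp add: u_def bij_betw_def)
    also have "\<dots> = 0" using c by (simp add: fun_eq_iff sum_fun_apply)
    finally have "(\<Sum>y\<in>B. vscale (u y) y) = 0" .
    then have "u (f j) = 0"
    proof -
      have "f j \<in> B" using bij by (auto simp: bij_betw_def)
      then show ?thesis using B(2) finB \<open>(\<Sum>y\<in>B. vscale (u y) y) = 0\<close>
        unfolding fv.independent_explicit_finite_subsets by blast
    qed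
    then show "c j = 0" using bij by (simp add: u_def bij_betw_def)
  qed
  show ?thesis unfolding diagonalisable_def
    using Mmap_add Mmap_scale eigw indw by blast
qed

lemma Mmap_nak:
  fixes g :: "'n::finite \<Rightarrow> 'n \<Rightarrow> 'k::field"
  assumes N: "\<forall>i q. g i q = (\<Sum>r\<in>UNIV. N i r * g q r)"
  shows "is_nakayama g (Mmap N)"
  unfolding is_nakayama_def
proof (intro allI)
  fix x y :: "'n \<Rightarrow> 'k"
  have "Lmap g (Mmap N x) q = (\<Sum>i\<in>UNIV. x i * g i q)" for q
  proof -
    have "Lmap g (Mmap N x) q = (\<Sum>r\<in>UNIV. \<Sum>i\<in>UNIV. x i * (N i r * g q r))"
      by (simp add: Lmap_def Mmap_def sum_distrib_right mult.assoc)
    also have "\<dots> = (\<Sum>i\<in>UNIV. x i * (\<Sum>r\<in>UNIV. N i r * g q r))"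
      by (subst sum.swap) (simp add: sum_distrib_left)
    also have "\<dots> = (\<Sum>i\<in>UNIV. x i * g i q)" by (simp add: N[rule_format, symmetric])
    finally show ?thesis .
  qed
  then have "bform g y (Mmap N x) = (\<Sum>q\<in>UNIV. y q * (\<Sum>i\<in>UNIV. x i * g i q))"
    by (simp add: bform_Lmap)
  also have "\<dots> = bform g x y"
    unfolding bform_def by (subst sum.swap) (simp add: sum_distrib_left mult_ac)
  finally show "bform g x y = bform g y (Mmap N x)" by simp
qed

lemma tensor_diag:
  fixes A :: "'i::finite \<Rightarrow> 'i \<Rightarrow> 'k::field" and B :: "'j::finite \<Rightarrow> 'j \<Rightarrow> 'k"
  assumes dA: "diagonalisable (Mmap A)" and dB: "diagonalisable (Mmap B)"
  shows "diagonalisable (Mmap (\<lambda>p r. A (fst p) (fst r) * B (snd p) (snd r)))"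
proof -
  obtain v :: "'i \<Rightarrow> 'i \<Rightarrow> 'k" and ev where eigv: "\<forall>j. Mmap A (v j) = vscale (ev j) (v j)"
    and indv: "\<forall>c. (\<forall>l. (\<Sum>j\<in>UNIV. c j * v j l) = 0) \<longrightarrow> (\<forall>j. c j = 0)"
    using dA unfolding diagonalisable_def by (elim conjE exE) blast
  obtain w :: "'j \<Rightarrow> 'j \<Rightarrow> 'k" and ew where eigw: "\<forall>j. Mmap B (w j) = vscale (ew j) (w j)"
    and indw: "\<forall>c. (\<forall>l. (\<Sum>j\<in>UNIV. c j * w j l) = 0) \<longrightarrow> (\<forall>j. c j = 0)"
    using dB unfolding diagonalisable_def by (elim conjE exE) blast
  define V where "V = (\<lambda>(a::'i, b::'j) (r::'i \<times> 'j). v a (fst r) * w b (snd r))"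
  define eV where "eV = (\<lambda>(a::'i, b::'j). ev a * ew b)"
  let ?M = "Mmap (\<lambda>p r. A (fst p) (fst r) * B (snd p) (snd r))"
  have eig: "?M (V q) = vscale (eV q) (V q)" for q
  proof
    fix r :: "'i \<times> 'j"
    obtain a b where q: "q = (a, b)" by fastforce
    obtain r1 r2 where r: "r = (r1, r2)" by fastforce
    have "?M (V q) r = (\<Sum>p\<in>UNIV \<times> UNIV. v a (fst p) * w b (snd p) * (A (fst p) r1 * B (snd p) r2))"
      by (simp add: Mmap_def V_def q r UNIV_Times_UNIV)
    also have "\<dots> = (\<Sum>i\<in>UNIV. \<Sum>j\<in>UNIV. (v a i * A i r1) * (w b j * B j r2))"
      unfolding sum.cartesian_product by (rule sum.cong) (auto simp: mult_ac)
    also have "\<dots> = Mmap A (v a) r1 * Mmap B (w b) r2"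
      by (simp add: Mmap_def sum_product)
    also have "\<dots> = vscale (eV q) (V q) r"
      using eigv eigw by (simp add: q r eV_def V_def mult_ac)
    finally show "?M (V q) r = vscale (eV q) (V q) r" .
  qed
  have ind: "\<forall>q. c q = 0" if c: "\<forall>l. (\<Sum>q\<in>UNIV. c q * V q l) = 0" for c
  proof -
    have s1: "(\<Sum>a\<in>UNIV. (\<Sum>b\<in>UNIV. c (a, b) * w b l2) * v a l1) = 0" for l1 l2
    proof -
      have "0 = (\<Sum>q\<in>UNIV \<times> UNIV. c q * V q (l1, l2))" using c by (simp add: UNIV_Times_UNIV)
      also have "\<dots> = (\<Sum>a\<in>UNIV. (\<Sum>b\<in>UNIV. c (a, b) * w b l2) * v a l1)"
        unfolding sum.cartesian_product sum_distrib_right by (rule sum.cong) (auto simp: V_def mult_ac)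
      finally show ?thesis by simp
    qed
    have "(\<Sum>b\<in>UNIV. c (a, b) * w b l2) = 0" for a l2
      using indv[rule_format, of "\<lambda>a. (\<Sum>b\<in>UNIV. c (a, b) * w b l2)"] s1 by (simp add: mult.commute)
    then have "c (a, b) = 0" for a b
      using indw[rule_format, of "\<lambda>b. c (a, b)"] by blast
    then show ?thesis by auto
  qed
  show ?thesis unfolding diagonalisable_def
    using Mmap_add Mmap_scale eig ind by blast
qed

lemma bform_delta: "bform g (delta a) (delta b) = g a b"
proof -
  have "(\<Sum>j\<in>UNIV. delta a i * delta b j * g i j) = (if i = a then g a b else 0)" for i
    by (cases "i = a") (simp_all add: delta_def if_distrib[where f="\<lambda>y. y * _"] cong: if_cong)
  then show ?thesis by (simp add: bform_def)
qed

lemma side: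
  fixes g :: "'n::finite \<Rightarrow> 'n \<Rightarrow> 'k::field" and deg :: "'n \<Rightarrow> 'a::ab_group_add"
  assumes frob: "frobenius_algebra m u g"
    and form: "\<forall>a a' r r'. homogeneous deg a r \<longrightarrow> homogeneous deg a' r' \<longrightarrow>
                   bform g r r' \<noteq> 0 \<longrightarrow> a + a' + \<sigma> = 0"
    and nak: "\<forall>\<nu>. is_nakayama g \<nu> \<longrightarrow> diagonalisable \<nu>"
  shows "\<exists>N. (\<forall>i q. g i q = (\<Sum>r\<in>UNIV. N i r * g q r)) \<and> (\<forall>i r. N i r \<noteq> 0 \<longrightarrow> deg r = deg i)
     \<and> (\<forall>h. diagonalisable (Mmap (\<lambda>i r. h (deg i) * N i r))) \<and> (\<forall>a b. g a b \<noteq> 0 \<longrightarrow> deg a + deg b + \<sigma> = 0)"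
proof -
  have nd: "\<forall>y. (\<forall>x. bform g x y = 0) \<longrightarrow> y = (\<lambda>_. 0)"
    using frob by (simp add: frobenius_algebra_def)
  have gr: "\<forall>a b. g a b \<noteq> 0 \<longrightarrow> deg a + deg b + \<sigma> = 0"
  proof (intro allI impI)
    fix a b assume "g a b \<noteq> 0"
    moreover have "homogeneous deg (deg c) (delta c :: 'n \<Rightarrow> 'k)" for c
      by (simp add: homogeneous_def delta_def)
    ultimately show "deg a + deg b + \<sigma> = 0"
      using form bform_delta[of g a b] by metis
  qed
  obtain N where N: "\<forall>i q. g i q = (\<Sum>r\<in>UNIV. N i r * g q r)"
    using nak_exists[OF nd] by blast
  have hom: "\<forall>i r. N i r \<noteq> 0 \<longrightarrow> deg r = deg i"
    using nak_homog[OF nd N gr] by blast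
  have "diagonalisable (Mmap N)" using nak Mmap_nak[OF N] by blast
  then have "\<forall>h. diagonalisable (Mmap (\<lambda>i r. h (deg i) * N i r))"
    using twist_diag[OF hom] by blast
  then show ?thesis using N hom gr by blast
qed

lemma bichar_facts:
  fixes t :: "'a::ab_group_add \<Rightarrow> 'b::ab_group_add \<Rightarrow> 'k::field"
  assumes "bicharacter t"
  shows "t (-a) b = inverse (t a b)" "t a (-b) = inverse (t a b)"
proof -
  have nz: "\<And>a b. t a b \<noteq> 0" and l: "\<And>a a' b. t (a + a') b = t a b * t a' b"
    and r: "\<And>a b b'. t a (b + b') = t a b * t a b'"
    using assms by (auto simp: bicharacter_def)
  have l0: "t 0 b = 1" for b using l[of 0 0 b] nz[of 0 b] by simp
  have r0: "t a 0 = 1" for a using r[of a 0 0] nz[of a 0] by simp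
  show "t (-a) b = inverse (t a b)" using l[of a "-a" b] l0 nz[of a b]
    by (simp add: field_simps)
  show "t a (-b) = inverse (t a b)" using r[of a b "-b"] r0 nz[of a b]
    by (simp add: field_simps)
qed

theorem mainTheorem7:
  fixes t :: "'a::ab_group_add \<Rightarrow> 'b::ab_group_add \<Rightarrow> 'k::field"
    and degR :: "'i::finite \<Rightarrow> 'a" and mR :: "'i \<Rightarrow> 'i \<Rightarrow> 'i \<Rightarrow> 'k"
    and uR :: "'i \<Rightarrow> 'k" and gR :: "'i \<Rightarrow> 'i \<Rightarrow> 'k"
    and degS :: "'j::finite \<Rightarrow> 'b" and mS :: "'j \<Rightarrow> 'j \<Rightarrow> 'j \<Rightarrow> 'k"
    and uS :: "'j \<Rightarrow> 'k" and gS :: "'j \<Rightarrow> 'j \<Rightarrow> 'k"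
    and \<sigma>R :: 'a and \<sigma>S :: 'b
  assumes R_frob: "frobenius_algebra mR uR gR" and R_graded: "graded_algebra degR mR"
    and S_frob: "frobenius_algebra mS uS gS" and S_graded: "graded_algebra degS mS"
    and t_bichar: "bicharacter t"
    and R_form: "\<forall>a a' r r'. homogeneous degR a r \<longrightarrow> homogeneous degR a' r' \<longrightarrow>
                   bform gR r r' \<noteq> 0 \<longrightarrow> a + a' + \<sigma>R = 0"
    and S_form: "\<forall>b b' s s'. homogeneous degS b s \<longrightarrow> homogeneous degS b' s' \<longrightarrow>
                   bform gS s s' \<noteq> 0 \<longrightarrow> b + b' + \<sigma>S = 0"
    and R_nak: "\<forall>\<nu>. is_nakayama gR \<nu> \<longrightarrow> diagonalisable \<nu>"
    and S_nak: "\<forall>\<nu>. is_nakayama gS \<nu> \<longrightarrow> diagonalisable \<nu>"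
  shows "\<exists>\<nu>. is_nakayama (twisted_gram t degR degS gR gS) \<nu> \<and> diagonalisable \<nu>"
proof -
  obtain NR where NR: "\<forall>i q. gR i q = (\<Sum>r\<in>UNIV. NR i r * gR q r)"
    and homR: "\<forall>i r. NR i r \<noteq> 0 \<longrightarrow> degR r = degR i"
    and diagR: "\<forall>h. diagonalisable (Mmap (\<lambda>i r. h (degR i) * NR i r))"
    and grR: "\<forall>a b. gR a b \<noteq> 0 \<longrightarrow> degR a + degR b + \<sigma>R = 0"
    using side[OF R_frob R_form R_nak] by blast
  obtain NS where NS: "\<forall>i q. gS i q = (\<Sum>r\<in>UNIV. NS i r * gS q r)"
    and homS: "\<forall>i r. NS i r \<noteq> 0 \<longrightarrow> degS r = degS i"
    and diagS: "\<forall>h. diagonalisable (Mmap (\<lambda>i r. h (degS i) * NS i r))"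
    and grS: "\<forall>a b. gS a b \<noteq> 0 \<longrightarrow> degS a + degS b + \<sigma>S = 0"
    using side[OF S_frob S_form S_nak] by blast
  have nz: "\<And>a b. t a b \<noteq> 0" and tl: "\<And>a a' b. t (a + a') b = t a b * t a' b"
    and tr: "\<And>a b b'. t a (b + b') = t a b * t a b'"
    using t_bichar by (auto simp: bicharacter_def)
  note neg = bichar_facts[OF t_bichar]
  define A where "A = (\<lambda>i r. t (degR i) \<sigma>S * NR i r)"
  define B where "B = (\<lambda>j r. inverse (t \<sigma>R (degS j)) * NS j r)"
  have dA: "diagonalisable (Mmap A)" using diagR[rule_format, of "\<lambda>a. t a \<sigma>S"] unfolding A_def by simp
  have dB: "diagonalisable (Mmap B)" using diagS[rule_format, of "\<lambda>b. inverse (t \<sigma>R b)"] unfolding B_def by simp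
  let ?G = "twisted_gram t degR degS gR gS"
  let ?NT = "\<lambda>p r. A (fst p) (fst r) * B (snd p) (snd r)"
  have key: "\<forall>p q. ?G p q = (\<Sum>r\<in>UNIV. ?NT p r * ?G q r)"
  proof (intro allI)
    fix p q :: "'i \<times> 'j"
    obtain i j where p: "p = (i, j)" by fastforce
    obtain q1 q2 where q: "q = (q1, q2)" by fastforce
    have "(\<Sum>r\<in>UNIV. ?NT p r * ?G q r)
       = (\<Sum>r1\<in>UNIV. \<Sum>r2\<in>UNIV. t (degR i) (degS q2) * (A i r1 * gR q1 r1) * (B j r2 * gS q2 r2))"
      unfolding sum.cartesian_product UNIV_Times_UNIV[symmetric]
    proof (rule sum.cong)
      fix r assume "r \<in> (UNIV :: 'i set) \<times> (UNIV :: 'j set)"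
      obtain r1 r2 where r: "r = (r1, r2)" by fastforce
      show "?NT p r * ?G q r = (case r of (r1, r2) \<Rightarrow> t (degR i) (degS q2) * (A i r1 * gR q1 r1) * (B j r2 * gS q2 r2))"
      proof (cases "A i r1 = 0")
        case True then show ?thesis by (simp add: p q r)
      next
        case False
        then have "degR r1 = degR i" using homR by (auto simp: A_def)
        then show ?thesis by (simp add: p q r twisted_gram_def mult_ac)
      qed
    qed simp
    also have "\<dots> = t (degR i) (degS q2) * (\<Sum>r1\<in>UNIV. A i r1 * gR q1 r1) * (\<Sum>r2\<in>UNIV. B j r2 * gS q2 r2)"
      by (simp add: sum_product sum_distrib_left mult_ac)
    also have "(\<Sum>r1\<in>UNIV. A i r1 * gR q1 r1) = t (degR i) \<sigma>S * gR i q1"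
      by (simp add: A_def sum_distrib_left[symmetric] mult.assoc NR[rule_format, symmetric])
    also have "(\<Sum>r2\<in>UNIV. B j r2 * gS q2 r2) = inverse (t \<sigma>R (degS j)) * gS j q2"
      by (simp add: B_def sum_distrib_left[symmetric] mult.assoc NS[rule_format, symmetric])
    finally have rhs: "(\<Sum>r\<in>UNIV. ?NT p r * ?G q r) =
      t (degR i) (degS q2) * (t (degR i) \<sigma>S * gR i q1) * (inverse (t \<sigma>R (degS j)) * gS j q2)" .
    show "?G p q = (\<Sum>r\<in>UNIV. ?NT p r * ?G q r)"
    proof (cases "gR i q1 = 0 \<or> gS j q2 = 0")
      case True then show ?thesis unfolding rhs by (auto simp: twisted_gram_def p q)
    next
      case False
      then have "degR i + degR q1 + \<sigma>R = 0" "degS j + degS q2 + \<sigma>S = 0" using grR grS by auto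
      then have e1: "degR q1 = - degR i + - \<sigma>R" and e2: "degS q2 = - degS j + - \<sigma>S"
        by (simp_all add: algebra_simps eq_neg_iff_add_eq_0)
      have "t (degR q1) (degS j) = inverse (t (degR i) (degS j)) * inverse (t \<sigma>R (degS j))"
      proof -
        have "t (degR q1) (degS j) = t (- degR i) (degS j) * t (- \<sigma>R) (degS j)"
          by (simp only: e1 tl)
        then show ?thesis by (simp add: neg)
      qed
      moreover have "t (degR i) (degS q2) * t (degR i) \<sigma>S = inverse (t (degR i) (degS j))"
      proof -
        have "t (degR i) (degS q2) * t (degR i) \<sigma>S = t (degR i) (degS q2 + \<sigma>S)" by (simp add: tr)
        also have "degS q2 + \<sigma>S = - degS j" using e2 by simp
        finally show ?thesis by (simp add: neg)
      qed
      ultimately show ?thesis unfolding rhs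
        by (simp add: twisted_gram_def p q mult_ac)
    qed
  qed
  show ?thesis using Mmap_nak[OF key] tensor_diag[OF dA dB] by blast
qed

end
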